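(* Let $p$ be a prime and $k,n$ positive integers. Then: (1) $P(p^{k+1},n)$ equals either $P(p^k,n)$ or $pP(p^k,n)$. (2) If $k\ge2$ and $P(p^{k+1},n)=pP(p^k,n)$, then $P(p^{k+2},n)=pP(p^{k+1},n)$. (3) If $P(p^{N+1},n)=pP(p^N,n)$ for some integer $N\ge2$, then $P(p^{N+k},n)=p^kP(p^N,n)$ for all positive integers $k$.
   Context: For positive integers $m,n$, let $\mathbf{Z}_m$ be the integers modulo $m$ and $T:\mathbf{Z}_m^n\to\mathbf{Z}_m^n$, $T(a_0,\dots,a_{n-1})=(a_0+a_1,a_1+a_2,\dots,a_{n-1}+a_0)$. For $\mathbf{a}\in\mathbf{Z}_m^n$ the cycle length of $(T^k\mathbf{a})_{k\ge0}$ is the smallest positive integer $P$ such that there is $N$ with $T^{k+P}\mathbf{a}=T^k\mathbf{a}$ for all $k\ge N$. $P(m,n)$ denotes the maximum of these cycle lengths over all $\mathbf{a}\in\mathbf{Z}_m^n$. *)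

theory Defs
  imports "HOL-Computational_Algebra.Primes"
begin

text \<open>Elements of Z_m^n are represented as functions nat => int with entries
  in {0..<m} at indices i < n and value 0 at indices i >= n.\<close>

definition Zvecs :: "nat \<Rightarrow> nat \<Rightarrow> (nat \<Rightarrow> int) set" where
  "Zvecs m n = {a. (\<forall>i<n. a i \<in> {0..<int m}) \<and> (\<forall>i\<ge>n. a i = 0)}"

definition Tmap :: "nat \<Rightarrow> nat \<Rightarrow> (nat \<Rightarrow> int) \<Rightarrow> (nat \<Rightarrow> int)" where
  "Tmap m n a = (\<lambda>i. if i < n then (a i + a (Suc i mod n)) mod int m else 0)"

definition cycle_len :: "nat \<Rightarrow> nat \<Rightarrow> (nat \<Rightarrow> int) \<Rightarrow> nat" where
  "cycle_len m n a = (LEAST P. P > 0 \<and> (\<exists>N. \<forall>k\<ge>N. (Tmap m n ^^ (k + P)) a = (Tmap m n ^^ k) a))"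

definition Pmax :: "nat \<Rightarrow> nat \<Rightarrow> nat" where
  "Pmax m n = Max (cycle_len m n ` Zvecs m n)"

end

theory Submission
  imports Defs "HOL-Computational_Algebra.Polynomial" "HOL-Library.FuncSet"
begin


definition XN :: "nat \<Rightarrow> int poly" where "XN n = monom 1 n - 1"

definition Zm :: "nat \<Rightarrow> nat \<Rightarrow> int poly \<Rightarrow> bool" where
  "Zm n m f \<longleftrightarrow> (\<exists>u v. f = of_nat m * u + XN n * v)"

lemma Zm_0[simp]: "Zm n m 0" unfolding Zm_def by (rule exI[of _ 0], rule exI[of _ 0]) simp

lemma Zm_add: "Zm n m f \<Longrightarrow> Zm n m g \<Longrightarrow> Zm n m (f + g)"
  unfolding Zm_def
proof (elim exE)
  fix u v u' v' assume "f = of_nat m * u + XN n * v" "g = of_nat m * u' + XN n * v'"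
  then show "\<exists>u v. f + g = of_nat m * u + XN n * v"
    by (intro exI[of _ "u+u'"] exI[of _ "v+v'"]) (simp add: algebra_simps)
qed

lemma Zm_uminus: "Zm n m f \<Longrightarrow> Zm n m (- f)"
  unfolding Zm_def
proof (elim exE)
  fix u v assume "f = of_nat m * u + XN n * v"
  then show "\<exists>u v. - f = of_nat m * u + XN n * v"
    by (intro exI[of _ "-u"] exI[of _ "-v"]) (simp add: algebra_simps)
qed

lemma Zm_diff: "Zm n m f \<Longrightarrow> Zm n m g \<Longrightarrow> Zm n m (f - g)"
  using Zm_add[of n m f "-g"] Zm_uminus by simp

lemma Zm_multl: "Zm n m f \<Longrightarrow> Zm n m (g * f)"
  unfolding Zm_def
proof (elim exE)
  fix u v assume "f = of_nat m * u + XN n * v"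
  then show "\<exists>u v. g * f = of_nat m * u + XN n * v"
    by (intro exI[of _ "g*u"] exI[of _ "g*v"]) (simp add: algebra_simps)
qed

lemma Zm_multr: "Zm n m f \<Longrightarrow> Zm n m (f * g)"
  using Zm_multl[of n m f g] by (simp add: mult.commute)

lemma Zm_XN: "Zm n m (XN n * v)"
  unfolding Zm_def by (intro exI[of _ 0] exI[of _ v]) simp

lemma Zm_const: "Zm n m (of_nat m)"
  unfolding Zm_def by (intro exI[of _ 1] exI[of _ 0]) simp

lemma Zm_mult: "Zm n a f \<Longrightarrow> Zm n b g \<Longrightarrow> Zm n (a*b) (f * g)"
  unfolding Zm_def
proof (elim exE)
  fix u v u' v' assume "f = of_nat a * u + XN n * v" "g = of_nat b * u' + XN n * v'"
  then show "\<exists>u v. f * g = of_nat (a*b) * u + XN n * v"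
    by (intro exI[of _ "u*u'"] exI[of _ "of_nat a * u * v' + v * g"]) (simp add: algebra_simps)
qed

lemma Zm_dvd: "a dvd b \<Longrightarrow> Zm n b f \<Longrightarrow> Zm n a f"
  unfolding Zm_def
proof (elim exE dvdE)
  fix u v c assume "f = of_nat b * u + XN n * v" "b = a * c"
  then show "\<exists>u v. f = of_nat a * u + XN n * v"
    by (intro exI[of _ "of_nat c * u"] exI[of _ v]) (simp add: algebra_simps)
qed

lemma Zm_power: "Zm n a f \<Longrightarrow> Zm n (a^j) (f^j)"
proof (induction j)
  case 0
  show ?case unfolding Zm_def by (intro exI[of _ 1] exI[of _ 0]) simp
next
  case (Suc j)
  then show ?case using Zm_mult[of n a f "a^j" "f^j"] by simp
qed

lemma Zm_sum: "(\<And>x. x \<in> A \<Longrightarrow> Zm n m (g x)) \<Longrightarrow> Zm n m (\<Sum>x\<in>A. g x)"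
  by (induction A rule: infinite_finite_induct) (auto intro: Zm_add)

lemma content_XN: "n > 0 \<Longrightarrow> content (XN n) = 1"
proof -
  assume "n > 0"
  have "content (XN n) dvd coeff (XN n) 0" by simp
  also have "coeff (XN n) 0 = -1" using \<open>n>0\<close> by (simp add: XN_def coeff_monom)
  finally have "content (XN n) dvd 1" by simp
  hence "\<bar>content (XN n)\<bar> = 1" by (simp add: zdvd1_eq)
  moreover have "normalize (content (XN n)) = content (XN n)" by (rule normalize_content)
  ultimately show ?thesis by simp
qed

lemma Zm_cancel:
  assumes "n > 0" "c > 0" "Zm n (c*m) (of_nat c * Y)"
  shows "Zm n m Y"
proof -
  obtain u v where uv: "of_nat c * Y = of_nat (c*m) * u + XN n * v"
    using assms(3) unfolding Zm_def by blast
  have e: "XN n * v = [:int c:] * (Y - of_nat m * u)"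
    using uv by (simp add: of_nat_poly[symmetric] algebra_simps)
  hence "[:int c:] dvd XN n * v" by (simp only: e) (rule dvd_triv_left)
  hence "int c dvd content (XN n * v)" by (simp add: const_poly_dvd_iff_dvd_content)
  hence "int c dvd content v" using content_mult[of "XN n" v] content_XN[OF assms(1)] by simp
  hence "[:int c:] dvd v" by (simp add: const_poly_dvd_iff_dvd_content)
  then obtain w where w: "v = [:int c:] * w" by blast
  have "[:int c:] * (Y - of_nat m * u - XN n * w) = 0"
    using e w by (simp add: algebra_simps)
  hence "Y = of_nat m * u + XN n * w" using assms(2) by simp
  thus ?thesis unfolding Zm_def by blast
qed



definition good :: "nat \<Rightarrow> nat \<Rightarrow> int poly \<Rightarrow> nat \<Rightarrow> bool" where
  "good n m t P \<longleftrightarrow> (\<exists>N. Zm n m (t^N * (t^P - 1)))"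

lemma Zm_shift: "Zm n m (t^N * w) \<Longrightarrow> N \<le> N' \<Longrightarrow> Zm n m (t^N' * w)"
proof -
  assume a: "Zm n m (t^N * w)" "N \<le> N'"
  have eq: "t^N' * w = t^(N'-N) * (t^N * w)" using a(2)
    by (metis (no_types, lifting) le_add_diff_inverse2 mult.assoc power_add)
  show ?thesis by (subst eq) (rule Zm_multl[OF a(1)])
qed

lemma good_common:
  assumes "good n m t P" "good n m t P'"
  obtains N where "Zm n m (t^N * (t^P - 1))" "Zm n m (t^N * (t^P' - 1))"
proof -
  obtain N1 N2 where "Zm n m (t^N1 * (t^P - 1))" "Zm n m (t^N2 * (t^P' - 1))"
    using assms unfolding good_def by blast
  hence "Zm n m (t^(max N1 N2) * (t^P - 1))" "Zm n m (t^(max N1 N2) * (t^P' - 1))"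
    by (auto elim: Zm_shift)
  thus ?thesis by (rule that)
qed

lemma good_sub:
  assumes "good n m t P'" "good n m t P" "P \<le> P'"
  shows "good n m t (P' - P)"
proof -
  obtain N where N: "Zm n m (t^N * (t^P - 1))" "Zm n m (t^N * (t^P' - 1))"
    using good_common[OF assms(2,1)] by blast
  have "t^P' = t^(P'-P) * t^P" using assms(3)
    by (metis le_add_diff_inverse2 power_add)
  hence "t^N * (t^(P'-P) - 1) = t^N * (t^P' - 1) - t^(P'-P) * (t^N * (t^P - 1))"
    by (simp add: algebra_simps)
  thus ?thesis unfolding good_def using Zm_diff[OF N(2) Zm_multl[OF N(1)]] by metis
qed

lemma good_0: "good n m t 0"
  unfolding good_def by (intro exI[of _ 0]) simp

lemma good_mult: "good n m t P \<Longrightarrow> good n m t (q * P)"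
proof (induction q)
  case 0 thus ?case by (simp add: good_0)
next
  case (Suc q)
  then obtain N where N: "Zm n m (t^N * (t^P - 1))" "Zm n m (t^N * (t^(q*P) - 1))"
    using good_common by blast
  have "t^N * (t^(Suc q * P) - 1) = t^P * (t^N * (t^(q*P) - 1)) + t^N * (t^P - 1)"
    by (simp add: algebra_simps power_add)
  thus ?case unfolding good_def using Zm_add[OF Zm_multl[OF N(2)] N(1)] by metis
qed

definition per :: "nat \<Rightarrow> nat \<Rightarrow> int poly \<Rightarrow> nat" where
  "per n m t = (LEAST P. P > 0 \<and> good n m t P)"

lemma per_props:
  assumes "\<exists>P>0. good n m t P"
  shows "per n m t > 0" "good n m t (per n m t)"
    "\<And>P. good n m t P \<Longrightarrow> per n m t dvd P"
proof -
  have L: "per n m t > 0 \<and> good n m t (per n m t)"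
    unfolding per_def by (rule LeastI_ex) (use assms in blast)
  thus "per n m t > 0" "good n m t (per n m t)" by auto
  fix P assume g: "good n m t P"
  let ?L = "per n m t"
  have "good n m t (P div ?L * ?L)" using good_mult L by blast
  hence "good n m t (P - P div ?L * ?L)"
    using good_sub[OF g] by (metis div_mult_mod_eq le_add1)
  hence gm: "good n m t (P mod ?L)" by (simp add: minus_div_mult_eq_mod)
  show "?L dvd P"
  proof (rule ccontr)
    assume "\<not> ?L dvd P"
    hence "P mod ?L > 0" by (simp add: mod_greater_zero_iff_not_dvd)
    hence "?L \<le> P mod ?L" unfolding per_def using gm[unfolded per_def] by (intro Least_le) simp
    moreover have "P mod ?L < ?L" using L by simp
    ultimately show False by simp
  qed
qed

lemma good_weaken: "a dvd b \<Longrightarrow> good n b t P \<Longrightarrow> good n a t P"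
  unfolding good_def using Zm_dvd by blast

lemma Zm_of_nat_dvd: "m dvd c \<Longrightarrow> Zm n m (of_nat c)"
proof -
  assume "m dvd c" then obtain d where "c = m * d" by blast
  thus ?thesis using Zm_multr[OF Zm_const[of n m], of "of_nat d"] by simp
qed

lemma good_lift:
  assumes "prime p" "k \<ge> 1" "good n (p^k) t Q"
  shows "good n (p^(k+1)) t (p * Q)"
proof -
  let ?u = "t^Q"
  obtain N where N: "Zm n (p^k) (t^N * (?u - 1))" using assms(3) unfolding good_def by blast
  let ?A = "t^N * (?u - 1)"
  define D where "D = (\<Sum>j<p. t^N * (?u^j - 1))"
  have D: "Zm n (p^k) D" unfolding D_def
  proof (rule Zm_sum)
    fix j
    have eq: "t^N * (?u^j - 1) = ?A * (\<Sum>i<j. ?u^i)"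
      by (simp add: power_diff_1_eq algebra_simps)
    show "Zm n (p^k) (t^N * (?u^j - 1))" by (subst eq) (rule Zm_multr[OF N])
  qed
  have S: "(\<Sum>j<p. t^N * ?u^j) = of_nat p * t^N + D"
    unfolding D_def by (simp add: algebra_simps sum_subtractf)
  have e1: "t^(p*Q) = ?u^p" by (simp add: power_mult[symmetric] mult.commute)
  have e2: "?u^p - 1 = (?u - 1) * (\<Sum>j<p. ?u^j)" by (rule power_diff_1_eq)
  have e3: "(\<Sum>j<p. t^N * ?u^j) = t^N * (\<Sum>j<p. ?u^j)" by (simp add: sum_distrib_left)
  have e4: "t^(2*N) = t^N * t^N" by (simp add: mult_2 power_add)
  have "t^(2*N) * (t^(p*Q) - 1) = ?A * (\<Sum>j<p. t^N * ?u^j)"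
    unfolding e1 e2 e3 e4 by (simp only: mult_ac)
  also have "\<dots> = (?A * of_nat p) * t^N + ?A * D" by (simp add: S algebra_simps)
  finally have e: "t^(2*N) * (t^(p*Q) - 1) = (?A * of_nat p) * t^N + ?A * D" .
  have 1: "Zm n (p^(k+1)) ((?A * of_nat p) * t^N)"
    using Zm_multr[OF Zm_mult[OF N Zm_const[of n p]]] by (simp add: mult.commute)
  have "Zm n (p^k * p^k) (?A * D)" using Zm_mult[OF N D] .
  moreover have "p^(k+1) dvd p^k * p^k"
    by (metis assms(2) add_le_mono le_refl le_imp_power_dvd power_add)
  ultimately have 2: "Zm n (p^(k+1)) (?A * D)" by (rule Zm_dvd[rotated])
  show ?thesis unfolding good_def using Zm_add[OF 1 2] e by metis
qed



lemma good_key: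
  assumes "prime p" "k \<ge> 2" "n > 0" "good n (p^k) t Q" "good n (p^(k+2)) t (p*Q)"
  shows "good n (p^(k+1)) t Q"
proof -
  define w where "w = t^Q - 1"
  obtain N where N: "Zm n (p^k) (t^N * w)" using assms(4) unfolding good_def w_def by blast
  obtain M0 where M0: "Zm n (p^(k+2)) (t^M0 * (t^(p*Q) - 1))" using assms(5) unfolding good_def by blast
  define M where "M = max M0 (p*N)"
  have M: "Zm n (p^(k+2)) (t^M * (t^(p*Q) - 1))" using Zm_shift[OF M0] M_def by simp
  have p2: "p \<ge> 2" using assms(1) prime_ge_2_nat by blast
  define g where "g j = (of_nat (p choose j) :: int poly) * w^j" for j
  have "t^(p*Q) = (w + 1)^p" unfolding w_def by (simp add: power_mult[symmetric] mult.commute)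
  also have "\<dots> = (\<Sum>j\<le>p. g j)" unfolding binomial_ring g_def by simp
  also have "\<dots> = g 0 + (g 1 + (\<Sum>j\<in>{..p}-{0}-{1}. g j))"
    using p2 by (simp add: sum.remove[of "{..p}" 0] sum.remove[of "{..p}-{0}" 1])
  also have "\<dots> = 1 + (of_nat p * w + (\<Sum>j\<in>{..p}-{0}-{1}. g j))" by (simp add: g_def)
  finally have bin: "t^(p*Q) - 1 = of_nat p * w + (\<Sum>j\<in>{..p}-{0}-{1}. g j)" by simp
  have R: "Zm n (p^(k+2)) (t^M * (\<Sum>j\<in>{..p}-{0}-{1}. g j))"
    unfolding sum_distrib_left
  proof (rule Zm_sum)
    fix j assume j: "j \<in> {..p}-{0}-{1}"
    hence j2: "j \<ge> 2" "j \<le> p" by auto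
    have "j * N \<le> M" unfolding M_def using j2 by (simp add: le_max_iff_disj)
    hence e1: "t^M = t^(M - j*N) * t^(j*N)" by (simp add: power_add[symmetric])
    have e2: "t^(j*N) = (t^N)^j" by (subst mult.commute) (rule power_mult)
    have eq: "t^M * g j = of_nat (p choose j) * (t^(M - j*N) * (t^N * w)^j)"
      unfolding g_def e1 e2 power_mult_distrib by (simp only: mult_ac)
    have P: "Zm n (p^(k*j)) ((t^N * w)^j)" using Zm_power[OF N, of j] by (simp add: power_mult)
    have kj: "k * j \<ge> 2 * k" using j2 by simp
    show "Zm n (p^(k+2)) (t^M * g j)"
    proof (cases "j = p")
      case True
      have "Zm n (p^(k*j)) (of_nat (p choose j) * (t^(M - j*N) * (t^N * w)^j))"
        by (rule Zm_multl, rule Zm_multl, rule P)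
      moreover have "k + 2 \<le> k*j" using kj assms(2) by linarith
      hence "p^(k+2) dvd p^(k*j)" by (rule le_imp_power_dvd)
      ultimately show ?thesis unfolding eq by (rule Zm_dvd[rotated])
    next
      case False
      have "p dvd (p choose j)" using False j2 assms(1) by (intro dvd_choose_prime) auto
      hence C: "Zm n p (of_nat (p choose j))" by (rule Zm_of_nat_dvd)
      have "Zm n (p * p^(k*j)) (of_nat (p choose j) * (t^(M - j*N) * (t^N * w)^j))"
        by (rule Zm_mult[OF C], rule Zm_multl, rule P)
      moreover have "k + 2 \<le> Suc (k*j)" using kj assms(2) by linarith
      hence "p^(k+2) dvd p^(Suc (k*j))" by (rule le_imp_power_dvd)
      hence "p^(k+2) dvd p * p^(k*j)" by simp
      ultimately show ?thesis unfolding eq by (rule Zm_dvd[rotated])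
    qed
  qed
  have "of_nat p * (t^M * w) = t^M * (t^(p*Q) - 1) - t^M * (\<Sum>j\<in>{..p}-{0}-{1}. g j)"
    unfolding bin by (simp add: algebra_simps)
  hence "Zm n (p * p^(k+1)) (of_nat p * (t^M * w))" using Zm_diff[OF M R] by simp
  hence "Zm n (p^(k+1)) (t^M * w)" using Zm_cancel[OF assms(3), of p "p^(k+1)" "t^M*w"] p2 by simp
  thus ?thesis unfolding good_def w_def by blast
qed



definition vp :: "nat \<Rightarrow> (nat \<Rightarrow> int) \<Rightarrow> int poly" where
  "vp n a = (\<Sum>i<n. monom (a i) i)"

definition fld :: "nat \<Rightarrow> int poly \<Rightarrow> nat \<Rightarrow> int" where
  "fld n f i = (\<Sum>j<Suc (degree f). if j mod n = i then coeff f j else 0)"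

lemma fld_bound:
  assumes "degree f < B"
  shows "fld n f i = (\<Sum>j<B. if j mod n = i then coeff f j else 0)"
  unfolding fld_def
  by (rule sum.mono_neutral_left) (use assms in \<open>auto simp: coeff_eq_0\<close>)

lemma fld_add: "fld n (f + g) i = fld n f i + fld n g i"
proof -
  define B where "B = Suc (max (degree f) (degree g))"
  have "degree (f+g) < B" using degree_add_le_max[of f g] unfolding B_def by simp
  thus ?thesis
    using fld_bound[where f=f and B=B and n=n and i=i] fld_bound[where f=g and B=B and n=n and i=i]
      fld_bound[where f="f+g" and B=B and n=n and i=i] unfolding B_def
    by (simp add: sum.distrib[symmetric]) (rule sum.cong, auto)
qed

lemma fld_uminus: "fld n (- f) i = - fld n f i"
  unfolding fld_def by (simp add: sum_negf[symmetric]) (rule sum.cong, auto)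

lemma fld_diff: "fld n (f - g) i = fld n f i - fld n g i"
  using fld_add[of n f "-g" i] fld_uminus[of n g i] by simp

lemma fld_of_nat: "fld n (of_nat m * u) i = int m * fld n u i"
proof -
  have e: "of_nat m * u = smult (int m) u" by (simp add: of_nat_poly)
  have "degree (smult (int m) u) < Suc (degree u)" using degree_smult_le[of "int m" u] by simp
  hence "fld n (smult (int m) u) i = (\<Sum>j<Suc (degree u). if j mod n = i then coeff (smult (int m) u) j else 0)"
    by (rule fld_bound)
  also have "\<dots> = int m * fld n u i" unfolding fld_def sum_distrib_left
    by (rule sum.cong) auto
  finally show ?thesis unfolding e .
qed

lemma coeff_monom1_shift: "coeff (monom 1 n * (v::int poly)) (j + n) = coeff v j"
  by (subst coeff_monom_mult) simp

lemma fld_shift: "fld n (monom 1 n * v) i = fld n v i"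
proof -
  define B where "B = n + Suc (degree v)"
  have "degree (monom 1 n * v) \<le> n + degree v"
    using degree_mult_le[of "monom (1::int) n" v] degree_monom_le[of "1::int" n] by simp
  hence d: "degree (monom 1 n * v) < B" unfolding B_def by simp
  define h where "h j = (if j mod n = i then coeff (monom 1 n * v) j else 0)" for j
  have "fld n (monom 1 n * v) i = sum h {0..<B}"
    unfolding fld_bound[OF d] h_def by (simp add: lessThan_atLeast0)
  also have "\<dots> = sum h {0..<n} + sum h {n..<B}"
    by (rule sum.atLeastLessThan_concat[symmetric]) (auto simp: B_def)
  also have "sum h {0..<n} = 0" unfolding h_def by (simp add: coeff_monom_mult)
  also have "sum h {n..<B} = sum (\<lambda>j. h (j + n)) {0..<Suc (degree v)}"
    unfolding B_def using sum.shift_bounds_nat_ivl[of h 0 n "Suc (degree v)"] by (simp add: add.commute)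
  also have "\<dots> = fld n v i" unfolding fld_def h_def
    by (simp only: coeff_monom1_shift lessThan_atLeast0 mod_add_self2)
  finally show ?thesis by simp
qed

lemma fld_XN: "fld n (XN n * v) i = 0"
  unfolding XN_def by (simp only: left_diff_distrib fld_diff fld_shift mult_1_left diff_self)

lemma coeff_vp: "coeff (vp n a) j = (if j < n then a j else 0)"
  unfolding vp_def by (simp add: coeff_sum coeff_monom)

lemma fld_vp: "i < n \<Longrightarrow> fld n (vp n a) i = a i"
proof -
  assume i: "i < n"
  have "degree (vp n a) < n"
  proof -
    have "degree (vp n a) \<le> n - 1" by (rule degree_le) (auto simp: coeff_vp)
    thus ?thesis using i by simp
  qed
  hence "fld n (vp n a) i = (\<Sum>j<n. if j mod n = i then coeff (vp n a) j else 0)"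
    by (rule fld_bound)
  also have "\<dots> = (\<Sum>j<n. if j = i then a j else 0)"
    by (rule sum.cong) (auto simp: coeff_vp)
  also have "\<dots> = a i" using i by simp
  finally show ?thesis .
qed

lemma vp_inj:
  assumes "m > 0" "a \<in> Zvecs m n" "b \<in> Zvecs m n" "Zm n m (vp n a - vp n b)"
  shows "a = b"
proof
  fix i
  obtain u v where uv: "vp n a - vp n b = of_nat m * u + XN n * v"
    using assms(4) unfolding Zm_def by blast
  show "a i = b i"
  proof (cases "i < n")
    case True
    define q where "q = fld n u i"
    have d: "a i - b i = int m * q"
      using arg_cong[OF uv, of "\<lambda>f. fld n f i"] True unfolding q_def
      by (simp add: fld_diff fld_add fld_vp fld_of_nat fld_XN)
    have b: "0 \<le> a i" "a i < int m" "0 \<le> b i" "b i < int m"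
      using assms(2,3) True unfolding Zvecs_def by auto
    show ?thesis
    proof (cases "q = 0")
      case True thus ?thesis using d by simp
    next
      case False
      hence "q \<ge> 1 \<or> q \<le> -1" by linarith
      thus ?thesis
      proof
        assume "q \<ge> 1"
        hence "int m * q \<ge> int m * 1" by (intro mult_left_mono) auto
        thus ?thesis using d b by linarith
      next
        assume "q \<le> -1"
        hence "int m * q \<le> int m * (-1)" by (intro mult_left_mono) auto
        thus ?thesis using d b by linarith
      qed
    qed
  next
    case False
    thus ?thesis using assms(2,3) unfolding Zvecs_def by auto
  qed
qed



definition tt :: "nat \<Rightarrow> int poly" where "tt n = 1 + monom 1 (n - 1)"

lemma monom_diff': "monom (a - b) n = monom a n - monom (b::int) n"
  by (simp add: poly_eq_iff coeff_monom)

lemma of_nat_monom: "of_nat m * monom x i = monom (int m * x) (i::nat)"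
  by (simp add: of_nat_poly monom_0[symmetric] mult_monom)

lemma Tmap_in: "m > 0 \<Longrightarrow> Tmap m n a \<in> Zvecs m n"
  unfolding Tmap_def Zvecs_def by auto

lemma iter_in: "m > 0 \<Longrightarrow> a \<in> Zvecs m n \<Longrightarrow> (Tmap m n ^^ k) a \<in> Zvecs m n"
  by (induction k) (auto intro: Tmap_in)

lemma vp_Tmap:
  assumes "n > 0"
  shows "Zm n m (vp n (Tmap m n a) - tt n * vp n a)"
proof -
  define c where "c i = a i + a (Suc i mod n)" for i
  have s1: "vp n (Tmap m n a) = (\<Sum>i<n. monom (c i mod int m) i)"
    unfolding vp_def Tmap_def c_def by (rule sum.cong) auto
  have s2: "Zm n m ((\<Sum>i<n. monom (c i mod int m) i) - (\<Sum>i<n. monom (c i) i))"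
    unfolding sum_subtractf[symmetric]
  proof (rule Zm_sum)
    fix i
    have "c i mod int m - c i = - (c i div int m * int m)"
      using div_mult_mod_eq[of "c i" "int m"] by linarith
    also have "\<dots> = int m * (- (c i div int m))" by simp
    finally have "c i mod int m - c i = int m * (- (c i div int m))" .
    hence "monom (c i mod int m) i - monom (c i) i = of_nat m * monom (- (c i div int m)) i"
      by (simp add: monom_diff'[symmetric] of_nat_monom)
    thus "Zm n m (monom (c i mod int m) i - monom (c i) i)"
      using Zm_multr[OF Zm_const[of n m]] by simp
  qed
  have s3: "(\<Sum>i<n. monom (c i) i) = vp n a + (\<Sum>i<n. monom (a (Suc i mod n)) i)"
    unfolding vp_def c_def by (simp add: add_monom[symmetric] sum.distrib)
  have s4: "tt n * vp n a = vp n a + (\<Sum>i<n. monom (a i) (n - 1 + i))"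
  proof -
    have "monom 1 (n - 1) * vp n a = (\<Sum>i<n. monom (a i) (n - 1 + i))"
      unfolding vp_def sum_distrib_left by (simp add: mult_monom)
    thus ?thesis unfolding tt_def by (simp add: distrib_right)
  qed
  obtain n' where n': "n = Suc n'" using assms by (cases n) auto
  have s5a: "(\<Sum>i<n. monom (a (Suc i mod n)) i) = (\<Sum>i<n'. monom (a (Suc i)) i) + monom (a 0) n'"
  proof -
    have "(\<Sum>i<n'. monom (a (Suc i mod Suc n')) i) = (\<Sum>i<n'. monom (a (Suc i)) i)"
      by (rule sum.cong) auto
    thus ?thesis unfolding n' sum.lessThan_Suc by simp
  qed
  have s5b: "(\<Sum>i<n. monom (a i) (n - 1 + i)) = monom (a 0) n' + (\<Sum>i<n'. monom (a (Suc i)) (n + i))"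
    unfolding n' sum.lessThan_Suc_shift by simp
  have s5: "Zm n m ((\<Sum>i<n. monom (a (Suc i mod n)) i) - (\<Sum>i<n. monom (a i) (n - 1 + i)))"
    unfolding s5a s5b
  proof -
    have "(\<Sum>i<n'. monom (a (Suc i)) i) + monom (a 0) n' - (monom (a 0) n' + (\<Sum>i<n'. monom (a (Suc i)) (n + i)))
        = (\<Sum>i<n'. monom (a (Suc i)) i - monom (a (Suc i)) (n + i))"
      by (simp add: sum_subtractf)
    also have "\<dots> = (\<Sum>i<n'. - (XN n * monom (a (Suc i)) i))"
    proof (rule sum.cong)
      fix i
      have "monom (a (Suc i)) (n + i) = monom 1 n * monom (a (Suc i)) i" by (simp add: mult_monom)
      thus "monom (a (Suc i)) i - monom (a (Suc i)) (n + i) = - (XN n * monom (a (Suc i)) i)"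
        unfolding XN_def by (simp add: algebra_simps)
    qed simp
    finally show "Zm n m ((\<Sum>i<n'. monom (a (Suc i)) i) + monom (a 0) n' - (monom (a 0) n' + (\<Sum>i<n'. monom (a (Suc i)) (n + i))))"
      using Zm_sum[of "{..<n'}" n m "\<lambda>i. - (XN n * monom (a (Suc i)) i)"] Zm_uminus Zm_XN by simp
  qed
  have "vp n (Tmap m n a) - tt n * vp n a =
     ((\<Sum>i<n. monom (c i mod int m) i) - (\<Sum>i<n. monom (c i) i))
     + ((\<Sum>i<n. monom (a (Suc i mod n)) i) - (\<Sum>i<n. monom (a i) (n - 1 + i)))"
    unfolding s1 s3 s4 by simp
  thus ?thesis using Zm_add[OF s2 s5] by simp
qed

lemma vp_iter:
  assumes "n > 0"
  shows "Zm n m (vp n ((Tmap m n ^^ k) a) - tt n ^ k * vp n a)"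
proof (induction k)
  case 0 thus ?case by simp
next
  case (Suc k)
  have eq: "vp n ((Tmap m n ^^ Suc k) a) - tt n ^ Suc k * vp n a =
    (vp n (Tmap m n ((Tmap m n ^^ k) a)) - tt n * vp n ((Tmap m n ^^ k) a))
    + tt n * (vp n ((Tmap m n ^^ k) a) - tt n ^ k * vp n a)"
    by (simp add: algebra_simps)
  show ?case unfolding eq by (rule Zm_add[OF vp_Tmap[OF assms] Zm_multl[OF Suc]])
qed



lemma finite_Zvecs: "finite (Zvecs m n)"
proof -
  let ?S = "PiE {..<n} (\<lambda>_. {0..<int m})"
  let ?f = "\<lambda>g::nat \<Rightarrow> int. (\<lambda>i. if i < n then g i else 0)"
  have "Zvecs m n \<subseteq> ?f ` ?S"
  proof
    fix a assume a: "a \<in> Zvecs m n"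
    have "restrict a {..<n} \<in> ?S" using a unfolding Zvecs_def by auto
    moreover have "a = ?f (restrict a {..<n})" using a unfolding Zvecs_def by auto
    ultimately show "a \<in> ?f ` ?S" by blast
  qed
  moreover have "finite (?f ` ?S)" by (intro finite_imageI finite_PiE) auto
  ultimately show ?thesis by (rule finite_subset)
qed

definition e0 :: "nat \<Rightarrow> int" where "e0 = (\<lambda>i. if i = 0 then 1 else 0)"

lemma e0_in: "m \<ge> 2 \<Longrightarrow> n > 0 \<Longrightarrow> e0 \<in> Zvecs m n"
  unfolding e0_def Zvecs_def by auto

lemma vp_e0: "n > 0 \<Longrightarrow> vp n e0 = 1"
proof -
  assume n: "n > 0"
  have "vp n e0 = (\<Sum>i<n. if i = 0 then monom 1 i else 0)"
    unfolding vp_def e0_def by (rule sum.cong) auto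
  also have "\<dots> = 1" using n by (simp add: monom_0 one_pCons)
  finally show ?thesis .
qed

lemma good_cond:
  assumes "n > 0" "m > 0" "a \<in> Zvecs m n" "good n m (tt n) P"
  shows "\<exists>N. \<forall>k\<ge>N. (Tmap m n ^^ (k + P)) a = (Tmap m n ^^ k) a"
proof -
  let ?t = "tt n"
  obtain N where N: "Zm n m (?t^N * (?t^P - 1))" using assms(4) unfolding good_def by blast
  have "(Tmap m n ^^ (k + P)) a = (Tmap m n ^^ k) a" if k: "k \<ge> N" for k
  proof (rule vp_inj[OF assms(2) iter_in[OF assms(2,3)] iter_in[OF assms(2,3)]])
    have t: "?t^(k+P) * vp n a - ?t^k * vp n a = (vp n a * ?t^(k-N)) * (?t^N * (?t^P - 1))"
      using k by (simp add: algebra_simps power_add[symmetric])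
    have eq: "vp n ((Tmap m n ^^ (k + P)) a) - vp n ((Tmap m n ^^ k) a) =
      (vp n ((Tmap m n ^^ (k + P)) a) - ?t^(k+P) * vp n a) - (vp n ((Tmap m n ^^ k) a) - ?t^k * vp n a)
      + (?t^(k+P) * vp n a - ?t^k * vp n a)" by simp
    show "Zm n m (vp n ((Tmap m n ^^ (k + P)) a) - vp n ((Tmap m n ^^ k) a))"
      unfolding eq t by (intro Zm_add Zm_diff vp_iter[OF assms(1)] Zm_multl N)
  qed
  thus ?thesis by blast
qed

lemma cond_good:
  assumes "n > 0" "\<forall>k\<ge>N. (Tmap m n ^^ (k + P)) e0 = (Tmap m n ^^ k) e0"
  shows "good n m (tt n) P"
proof -
  let ?t = "tt n"
  have e: "vp n ((Tmap m n ^^ (N + P)) e0) = vp n ((Tmap m n ^^ N) e0)" using assms(2) by simp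
  have "?t^N * (?t^P - 1) = (vp n ((Tmap m n ^^ N) e0) - ?t^N * vp n e0)
      - (vp n ((Tmap m n ^^ (N + P)) e0) - ?t^(N+P) * vp n e0)"
    unfolding e vp_e0[OF assms(1)] by (simp add: algebra_simps power_add)
  hence "Zm n m (?t^N * (?t^P - 1))" using Zm_diff[OF vp_iter[OF assms(1)] vp_iter[OF assms(1)]] by metis
  thus ?thesis unfolding good_def by blast
qed

lemma exists_cond:
  assumes "m \<ge> 2" "n > 0"
  shows "\<exists>P>0. \<exists>N. \<forall>k\<ge>N. (Tmap m n ^^ (k + P)) e0 = (Tmap m n ^^ k) e0"
proof -
  define f where "f k = (Tmap m n ^^ k) e0" for k
  have "range f \<subseteq> Zvecs m n" unfolding f_def using iter_in e0_in assms by auto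
  hence "finite (range f)" using finite_Zvecs finite_subset by blast
  hence "\<not> inj f" using finite_imageD infinite_UNIV_nat by blast
  then obtain i j where ij: "f i = f j" "i \<noteq> j" unfolding inj_def by blast
  obtain i j where ij: "f i = f j" "i < j"
    using ij by (metis linorder_neqE_nat)
  have "(Tmap m n ^^ (k + (j - i))) e0 = (Tmap m n ^^ k) e0" if "k \<ge> i" for k
  proof -
    have "(Tmap m n ^^ (k + (j - i))) e0 = (Tmap m n ^^ (k - i)) (f j)"
    proof -
      have "k + (j - i) = (k - i) + j" using that ij(2) by simp
      thus ?thesis unfolding f_def by (simp only: funpow_add comp_apply)
    qed
    also have "\<dots> = (Tmap m n ^^ (k - i)) (f i)" using ij by simp
    also have "\<dots> = (Tmap m n ^^ k) e0"
    proof -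
      have "k = (k - i) + i" using that by simp
      hence "(Tmap m n ^^ k) e0 = (Tmap m n ^^ ((k - i) + i)) e0" by simp
      thus ?thesis unfolding f_def by (simp only: funpow_add comp_apply)
    qed
    finally show ?thesis .
  qed
  thus ?thesis using ij(2) by (intro exI[of _ "j - i"]) auto
qed

lemma Pmax_per:
  assumes "m \<ge> 2" "n > 0"
  shows "\<exists>P>0. good n m (tt n) P" "Pmax m n = per n m (tt n)"
proof -
  have m: "m > 0" using assms by simp
  show ex: "\<exists>P>0. good n m (tt n) P" using exists_cond[OF assms] cond_good[OF assms(2)] by blast
  let ?L = "per n m (tt n)"
  have gL: "good n m (tt n) ?L" by (rule per_props(2)[OF ex])
  have c0: "cycle_len m n e0 = ?L"
    unfolding cycle_len_def per_def
    by (rule arg_cong[where f=Least], rule ext)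
       (use cond_good[OF assms(2)] good_cond[OF assms(2) m e0_in[OF assms]] in blast)
  have le: "cycle_len m n a \<le> ?L" if "a \<in> Zvecs m n" for a
    unfolding cycle_len_def
    by (rule Least_le) (use per_props(1)[OF ex] good_cond[OF assms(2) m that gL] in blast)
  show "Pmax m n = ?L" unfolding Pmax_def
    by (rule Max_eqI) (use finite_Zvecs le c0 e0_in[OF assms] in \<open>auto intro: rev_image_eqI[of e0 _ "?L" "cycle_len m n"]\<close>)
qed



theorem theorem5p1:
  fixes p n :: nat
  assumes "prime p" and "n > 0"
  shows "(\<forall>k>0. Pmax (p^(k+1)) n = Pmax (p^k) n \<or> Pmax (p^(k+1)) n = p * Pmax (p^k) n)
       \<and> (\<forall>k\<ge>2. Pmax (p^(k+1)) n = p * Pmax (p^k) n \<longrightarrow> Pmax (p^(k+2)) n = p * Pmax (p^(k+1)) n)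
       \<and> (\<forall>N\<ge>2. Pmax (p^(N+1)) n = p * Pmax (p^N) n \<longrightarrow>
            (\<forall>k>0. Pmax (p^(N+k)) n = p^k * Pmax (p^N) n))"
proof -
  have p2: "p \<ge> 2" using assms(1) prime_ge_2_nat by blast
  have pk: "p^k \<ge> 2" if "k > 0" for k
  proof -
    have "p^1 \<le> p^k" using that p2 by (intro power_increasing) auto
    thus ?thesis using p2 by simp
  qed
  define t where "t = tt n"
  have ex: "\<exists>P>0. good n (p^k) t P" if "k > 0" for k
    using Pmax_per(1)[OF pk[OF that] assms(2)] unfolding t_def .
  have Qe: "Pmax (p^k) n = per n (p^k) t" if "k > 0" for k
    using Pmax_per(2)[OF pk[OF that] assms(2)] unfolding t_def .
  have pos: "per n (p^k) t > 0" if "k > 0" for k using per_props(1)[OF ex[OF that]] .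
  have gd: "good n (p^k) t (per n (p^k) t)" if "k > 0" for k using per_props(2)[OF ex[OF that]] .
  have dv: "per n (p^k) t dvd P" if "k > 0" "good n (p^k) t P" for k P
    using per_props(3)[OF ex[OF that(1)] that(2)] .
  have P1: "per n (p^(k+1)) t = per n (p^k) t \<or> per n (p^(k+1)) t = p * per n (p^k) t"
    if k: "k > 0" for k
  proof -
    have "good n (p^k) t (per n (p^(k+1)) t)"
      by (rule good_weaken[OF _ gd]) (auto simp: le_imp_power_dvd)
    hence "per n (p^k) t dvd per n (p^(k+1)) t" using dv k by blast
    then obtain d where d: "per n (p^(k+1)) t = per n (p^k) t * d" by blast
    have "good n (p^(k+1)) t (p * per n (p^k) t)"
      by (rule good_lift[OF assms(1) _ gd]) (use k in auto)
    hence "per n (p^(k+1)) t dvd p * per n (p^k) t" by (intro dv) simp_all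
    hence "per n (p^k) t * d dvd per n (p^k) t * p" unfolding d by (simp add: mult.commute)
    hence "d dvd p" using pos[OF k] by simp
    hence "d = 1 \<or> d = p" using assms(1) unfolding prime_nat_iff by blast
    thus ?thesis using d by auto
  qed
  have P2: "per n (p^(k+2)) t = p * per n (p^(k+1)) t"
    if k: "k \<ge> 2" and h: "per n (p^(k+1)) t = p * per n (p^k) t" for k
  proof (rule ccontr)
    assume "per n (p^(k+2)) t \<noteq> p * per n (p^(k+1)) t"
    hence e: "per n (p^(k+2)) t = per n (p^(k+1)) t" using P1[of "k+1"] by (simp add: add.assoc)
    have "good n (p^(k+2)) t (p * per n (p^k) t)" using gd[of "k+2"] e h by simp
    hence "good n (p^(k+1)) t (per n (p^k) t)"
      using good_key[OF assms(1) k assms(2) gd] k by simp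
    hence "per n (p^(k+1)) t dvd per n (p^k) t" by (intro dv) simp_all
    hence "p * per n (p^k) t \<le> 1 * per n (p^k) t" unfolding h using pos[of k] k
      by (simp add: dvd_imp_le)
    thus False using pos[of k] k p2 by (simp only: mult_le_cancel2) simp
  qed
  show ?thesis
  proof (intro conjI allI impI)
    fix k :: nat assume "k > 0"
    thus "Pmax (p^(k+1)) n = Pmax (p^k) n \<or> Pmax (p^(k+1)) n = p * Pmax (p^k) n"
      using P1[of k] Qe[of k] Qe[of "k+1"] by simp
  next
    fix k :: nat assume k: "k \<ge> 2" "Pmax (p^(k+1)) n = p * Pmax (p^k) n"
    thus "Pmax (p^(k+2)) n = p * Pmax (p^(k+1)) n"
      using P2[of k] Qe[of k] Qe[of "k+1"] Qe[of "k+2"] by simp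
  next
    fix N k :: nat assume N: "N \<ge> 2" "Pmax (p^(N+1)) n = p * Pmax (p^N) n" "k > 0"
    have st: "per n (p^(N+j+1)) t = p * per n (p^(N+j)) t" for j
    proof (induction j)
      case 0 thus ?case using N Qe[of N] Qe[of "N+1"] by simp
    next
      case (Suc j)
      have "per n (p^(N+j+2)) t = p * per n (p^(N+j+1)) t"
        by (rule P2) (use N Suc in auto)
      thus ?case by (simp add: add.assoc)
    qed
    have "per n (p^(N+j)) t = p^j * per n (p^N) t" for j
    proof (induction j)
      case 0 thus ?case by simp
    next
      case (Suc j) thus ?case using st[of j] by (simp add: add.assoc[symmetric])
    qed
    thus "Pmax (p^(N+k)) n = p^k * Pmax (p^N) n" using Qe[of N] Qe[of "N+k"] N by simp
  qed
qed

end
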